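(* Fix $\rho_r\in(0,1)$, $\rho_w\in(0,1/2)$, $\epsilon>0$ with $\rho_r<1-h(\rho_w)-2\epsilon$. Fix a view $V\in\{0,1,?\}^n$ with $\rho_r n$ non-$?$ coordinates and $e\in\{0,1\}^n$ of Hamming weight at most $\rho_w n$. Let $S_r$ consist of $2^{\epsilon n/4}$ independent uniformly random elements of the set of strings consistent with $V$. Then with probability $1-\exp(-\Omega(n^2))$ over the choice of $S_r$, there are at most $O(n^4)\cdot2^{\epsilon n/8}$ elements $x\in S_r$ such that the Hamming ball of radius $\rho_w n$ around $x+e$ contains another element of $S_r$.
   Context: $h$ is the binary entropy function. A string $x$ is consistent with $V=(v_i)$ if $x_i=v_i$ whenever $v_i\ne ?$. *)

theory Defs
  imports "HOL-Probability.Probability"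
begin

definition bin_entropy :: "real \<Rightarrow> real" where
  "bin_entropy p = - p * log 2 p - (1 - p) * log 2 (1 - p)"

definition hdist :: "bool list \<Rightarrow> bool list \<Rightarrow> nat" where
  "hdist x y = card {i. i < length x \<and> x ! i \<noteq> y ! i}"

definition hweight :: "bool list \<Rightarrow> nat" where
  "hweight x = card {i. i < length x \<and> x ! i}"

definition xor_str :: "bool list \<Rightarrow> bool list \<Rightarrow> bool list" where
  "xor_str x y = map2 (\<noteq>) x y"

text \<open>A view is a list over {0,1,?}: None stands for ?.\<close>
definition consistent :: "bool option list \<Rightarrow> bool list set" where
  "consistent V = {x. length x = length V \<and>
       (\<forall>i < length V. V ! i \<noteq> None \<longrightarrow> x ! i = the (V ! i))}"

definition nonq_count :: "bool option list \<Rightarrow> nat" where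
  "nonq_count V = card {i. i < length V \<and> V ! i \<noteq> None}"

definition bad_count :: "real \<Rightarrow> bool list \<Rightarrow> bool list list \<Rightarrow> nat" where
  "bad_count r e S = card {i. i < length S \<and>
       (\<exists>j < length S. j \<noteq> i \<and> real (hdist (S ! j) (xor_str (S ! i) e)) \<le> r)}"

end

theory Submission
  imports Defs
begin


fun hitL :: "('a \<Rightarrow> 'a \<Rightarrow> bool) \<Rightarrow> 'a list \<Rightarrow> nat" where
  "hitL R [] = 0"
| "hitL R (x#xs) = (if \<exists>y\<in>set xs. R x y then 1 else 0) + hitL R xs"

lemma card_L: "card {i. i < length S \<and> (\<exists>j<length S. i < j \<and> R (S!i) (S!j))} = hitL R S"
proof (induction S)
  case Nil then show ?case by simp
next
  case (Cons x xs)
  let ?A = "{i. i < length xs \<and> (\<exists>j<length xs. i < j \<and> R (xs!i) (xs!j))}"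
  have eq: "{i. i < length (x#xs) \<and> (\<exists>j<length (x#xs). i < j \<and> R ((x#xs)!i) ((x#xs)!j))}
     = (if \<exists>y\<in>set xs. R x y then {0} else {}) \<union> Suc ` ?A"
  proof (rule set_eqI)
    fix i show "i \<in> {i. i < length (x#xs) \<and> (\<exists>j<length (x#xs). i < j \<and> R ((x#xs)!i) ((x#xs)!j))}
       \<longleftrightarrow> i \<in> (if \<exists>y\<in>set xs. R x y then {0} else {}) \<union> Suc ` ?A"
    proof (cases i)
      case 0
      have "(\<exists>j<length (x#xs). 0 < j \<and> R x ((x#xs)!j)) \<longleftrightarrow> (\<exists>y\<in>set xs. R x y)"
      proof
        assume "\<exists>j<length (x#xs). 0 < j \<and> R x ((x#xs)!j)"
        then obtain j where j: "j < Suc (length xs)" "0 < j" "R x ((x#xs)!j)" by auto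
        then obtain k where k: "j = Suc k" by (cases j) auto
        have "k < length xs" using j k by simp
        then have "xs ! k \<in> set xs" by (rule nth_mem)
        then show "\<exists>y\<in>set xs. R x y" using j k by auto
      next
        assume "\<exists>y\<in>set xs. R x y"
        then obtain y where y: "y \<in> set xs" "R x y" by blast
        then obtain k where k: "k < length xs" "xs ! k = y" by (auto simp: in_set_conv_nth)
        show "\<exists>j<length (x#xs). 0 < j \<and> R x ((x#xs)!j)"
          using k y by (intro exI[of _ "Suc k"]) auto
      qed
      then show ?thesis using 0 by auto
    next
      case (Suc k)
      have "(\<exists>j<length (x#xs). Suc k < j \<and> R (xs!k) ((x#xs)!j)) \<longleftrightarrow> (\<exists>j<length xs. k < j \<and> R (xs!k) (xs!j))"
      proof
        assume "\<exists>j<length (x#xs). Suc k < j \<and> R (xs!k) ((x#xs)!j)"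
        then obtain j where j: "j < Suc (length xs)" "Suc k < j" "R (xs!k) ((x#xs)!j)" by auto
        then obtain l where l: "j = Suc l" by (cases j) auto
        show "\<exists>j<length xs. k < j \<and> R (xs!k) (xs!j)"
          using j l by (intro exI[of _ l]) auto
      next
        assume "\<exists>j<length xs. k < j \<and> R (xs!k) (xs!j)"
        then obtain j where j: "j < length xs" "k < j" "R (xs!k) (xs!j)" by blast
        show "\<exists>j<length (x#xs). Suc k < j \<and> R (xs!k) ((x#xs)!j)"
          using j by (intro exI[of _ "Suc j"]) auto
      qed
      then show ?thesis using Suc by auto
    qed
  qed
  have fin: "finite ?A" by simp
  have "card (Suc ` ?A) = card ?A" by (simp add: card_image)
  moreover have "0 \<notin> Suc ` ?A" by auto
  ultimately show ?case unfolding eq using Cons fin by auto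
qed

lemma card_E: "card {i. i < length S \<and> (\<exists>j<i. R (S!i) (S!j))} = hitL R (rev S)"
proof (induction S rule: rev_induct)
  case Nil then show ?case by simp
next
  case (snoc x xs)
  let ?A = "{i. i < length xs \<and> (\<exists>j<i. R (xs!i) (xs!j))}"
  have eq: "{i. i < length (xs@[x]) \<and> (\<exists>j<i. R ((xs@[x])!i) ((xs@[x])!j))}
     = (if \<exists>y\<in>set xs. R x y then {length xs} else {}) \<union> ?A"
  proof (rule set_eqI)
    fix i show "i \<in> {i. i < length (xs@[x]) \<and> (\<exists>j<i. R ((xs@[x])!i) ((xs@[x])!j))}
       \<longleftrightarrow> i \<in> (if \<exists>y\<in>set xs. R x y then {length xs} else {}) \<union> ?A"
    proof (cases "i = length xs")
      case True
      have "(\<exists>j<length xs. R x ((xs@[x])!j)) \<longleftrightarrow> (\<exists>y\<in>set xs. R x y)"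
      proof
        assume "\<exists>j<length xs. R x ((xs@[x])!j)"
        then obtain j where j: "j < length xs" "R x ((xs@[x])!j)" by blast
        then have "R x (xs ! j)" by (simp add: nth_append)
        then show "\<exists>y\<in>set xs. R x y" using j(1) nth_mem by blast
      next
        assume "\<exists>y\<in>set xs. R x y"
        then obtain y where y: "y \<in> set xs" "R x y" by blast
        then obtain k where k: "k < length xs" "xs ! k = y" by (auto simp: in_set_conv_nth)
        show "\<exists>j<length xs. R x ((xs@[x])!j)"
          using k y by (intro exI[of _ k]) (auto simp: nth_append)
      qed
      then show ?thesis using True by auto
    next
      case False
      have iff: "(i < length (xs@[x]) \<and> (\<exists>j<i. R ((xs@[x])!i) ((xs@[x])!j)))
          \<longleftrightarrow> (i < length xs \<and> (\<exists>j<i. R (xs!i) (xs!j)))"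
      proof (cases "i < length xs")
        case True
        have "(xs@[x])!i = xs!i" using True by (simp add: nth_append)
        moreover have "\<And>j. j < i \<Longrightarrow> (xs@[x])!j = xs!j" using True by (simp add: nth_append)
        ultimately show ?thesis using True by auto
      next
        case F2: False
        then show ?thesis using False by simp
      qed
      show ?thesis using False iff by simp
    qed
  qed
  have "length xs \<notin> ?A" by auto
  then show ?case unfolding eq using snoc by auto
qed



lemma replicate_pmf_snoc:
  "replicate_pmf (Suc n) p = bind_pmf (replicate_pmf n p) (\<lambda>xs. map_pmf (\<lambda>x. xs @ [x]) p)"
  using replicate_pmf_distrib[of n 1 p]
  by (simp add: replicate_pmf_1 map_pmf_def bind_assoc_pmf bind_return_pmf)

lemma replicate_pmf_rev: "map_pmf rev (replicate_pmf n p) = replicate_pmf n p"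
proof (induction n)
  case 0 then show ?case by simp
next
  case (Suc n)
  have "map_pmf rev (replicate_pmf (Suc n) p)
      = bind_pmf p (\<lambda>x. bind_pmf (map_pmf rev (replicate_pmf n p)) (\<lambda>xs. return_pmf (xs @ [x])))"
    by (simp add: map_pmf_def bind_assoc_pmf bind_return_pmf)
  also have "\<dots> = bind_pmf p (\<lambda>x. bind_pmf (replicate_pmf n p) (\<lambda>xs. return_pmf (xs @ [x])))"
    using Suc by simp
  also have "\<dots> = bind_pmf (replicate_pmf n p) (\<lambda>xs. bind_pmf p (\<lambda>x. return_pmf (xs @ [x])))"
    by (rule bind_commute_pmf)
  also have "\<dots> = replicate_pmf (Suc n) p"
    by (subst replicate_pmf_snoc) (simp add: map_pmf_def del: replicate_pmf.simps)
  finally show ?case .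
qed

lemma replicate_pmf_cons':
  "replicate_pmf (Suc n) p = bind_pmf (replicate_pmf n p) (\<lambda>xs. map_pmf (\<lambda>x. x # xs) p)"
  by (simp add: map_pmf_def bind_commute_pmf[of p])

lemma hit_bound:
  fixes p :: "'a pmf" and q :: real
  assumes nb: "\<And>y. y \<in> set_pmf p \<Longrightarrow> measure_pmf.prob p {x. R x y} \<le> q" and q0: "q \<ge> 0"
  shows "measure_pmf.prob (replicate_pmf M p) {S. t \<le> hitL R S} \<le> (real M ^ 2 * q) ^ t"
proof (induction M arbitrary: t)
  case 0
  then show ?case by (cases t) auto
next
  case (Suc M)
  show ?case
  proof (cases t)
    case 0 then show ?thesis by simp
  next
    case (Suc s)
    define a where "a = real M * q"
    have a0: "a \<ge> 0" using q0 by (simp add: a_def)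
    have pt: "emeasure (measure_pmf p) {x. Suc s \<le> hitL R (x # xs)}
        \<le> ennreal a * indicator {xs. s \<le> hitL R xs} xs + indicator {xs. Suc s \<le> hitL R xs} xs"
      if xs: "xs \<in> set_pmf (replicate_pmf M p)" for xs
    proof -
      consider "Suc s \<le> hitL R xs" | "hitL R xs = s" | "hitL R xs < s" by linarith
      then show ?thesis
      proof cases
        case 1
        then show ?thesis by (simp add: measure_pmf.emeasure_le_1 add_increasing)
      next
        case 2
        have sub: "{x. Suc s \<le> hitL R (x # xs)} \<subseteq> (\<Union>y\<in>set xs. {x. R x y})"
          using 2 by auto
        have "measure_pmf.prob p {x. Suc s \<le> hitL R (x # xs)} \<le> measure_pmf.prob p (\<Union>y\<in>set xs. {x. R x y})"
          using sub by (intro measure_pmf.finite_measure_mono) auto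
        also have "\<dots> \<le> (\<Sum>y\<in>set xs. measure_pmf.prob p {x. R x y})"
          by (intro measure_pmf.finite_measure_subadditive_finite) auto
        also have "\<dots> \<le> (\<Sum>y\<in>set xs. q)"
          using xs by (intro sum_mono nb) (auto simp: set_replicate_pmf)
        also have "\<dots> \<le> a"
        proof -
          have "card (set xs) \<le> M" using xs card_length[of xs] by (simp add: set_replicate_pmf)
          then show ?thesis using q0 by (simp add: a_def mult_right_mono)
        qed
        finally have "measure_pmf.prob p {x. Suc s \<le> hitL R (x # xs)} \<le> a" .
        then show ?thesis using 2 a0
          by (simp add: measure_pmf.emeasure_eq_measure)
      next
        case 3
        then have "{x. Suc s \<le> hitL R (x # xs)} = {}" by auto
        then show ?thesis by simp
      qed
    qed
    have "emeasure (measure_pmf (replicate_pmf (Suc M) p)) {S. t \<le> hitL R S}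
        = (\<integral>\<^sup>+xs. emeasure (measure_pmf p) {x. Suc s \<le> hitL R (x # xs)} \<partial>measure_pmf (replicate_pmf M p))"
      unfolding replicate_pmf_cons' Suc by (simp add: vimage_def)
    also have "\<dots> \<le> (\<integral>\<^sup>+xs. ennreal a * indicator {xs. s \<le> hitL R xs} xs + indicator {xs. Suc s \<le> hitL R xs} xs \<partial>measure_pmf (replicate_pmf M p))"
      apply (intro nn_integral_mono_AE)
      apply (subst AE_measure_pmf_iff)
      using pt by blast
    also have "\<dots> = ennreal a * emeasure (measure_pmf (replicate_pmf M p)) {xs. s \<le> hitL R xs}
                    + emeasure (measure_pmf (replicate_pmf M p)) {xs. Suc s \<le> hitL R xs}"
      by (simp add: nn_integral_add nn_integral_cmult)
    also have "\<dots> = ennreal (a * measure_pmf.prob (replicate_pmf M p) {xs. s \<le> hitL R xs}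
                    + measure_pmf.prob (replicate_pmf M p) {xs. Suc s \<le> hitL R xs})"
      using a0 by (simp add: measure_pmf.emeasure_eq_measure ennreal_mult ennreal_plus)
    finally have "emeasure (measure_pmf (replicate_pmf (Suc M) p)) {S. t \<le> hitL R S} \<le> ennreal (a * measure_pmf.prob (replicate_pmf M p) {xs. s \<le> hitL R xs}
                    + measure_pmf.prob (replicate_pmf M p) {xs. Suc s \<le> hitL R xs})" .
    note F = this
    have le: "measure_pmf.prob (replicate_pmf (Suc M) p) {S. t \<le> hitL R S}
        \<le> a * measure_pmf.prob (replicate_pmf M p) {xs. s \<le> hitL R xs}
                    + measure_pmf.prob (replicate_pmf M p) {xs. Suc s \<le> hitL R xs}"
    proof -
      have nn: "0 \<le> a * measure_pmf.prob (replicate_pmf M p) {xs. s \<le> hitL R xs}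
                    + measure_pmf.prob (replicate_pmf M p) {xs. Suc s \<le> hitL R xs}" using a0 by simp
      show ?thesis using F[unfolded measure_pmf.emeasure_eq_measure] ennreal_le_iff[OF nn] by simp
    qed
    define A where "A = real M ^ 2 * q"
    define B where "B = (real (Suc M) ^ 2 - real M ^ 2) * q"
    have A0: "A \<ge> 0" using q0 by (simp add: A_def)
    have aB: "a \<le> B" using q0 by (simp add: a_def B_def power2_eq_square algebra_simps mult_right_mono)
    have B0: "B \<ge> 0" using a0 aB by linarith
    have "a * measure_pmf.prob (replicate_pmf M p) {xs. s \<le> hitL R xs}
                    + measure_pmf.prob (replicate_pmf M p) {xs. Suc s \<le> hitL R xs}
          \<le> B * A ^ s + A ^ Suc s"
      using Suc.IH[of s] Suc.IH[of "Suc s"] aB a0 A0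
      by (intro add_mono mult_mono) (auto simp: A_def)
    also have "\<dots> = (A + B) * A ^ s" by (simp add: algebra_simps)
    also have "\<dots> \<le> (A + B) * (A + B) ^ s"
      using A0 B0 by (intro mult_left_mono power_mono) auto
    also have "\<dots> = (real (Suc M) ^ 2 * q) ^ t"
      by (simp add: A_def B_def Suc algebra_simps)
    finally show ?thesis using le by linarith
  qed
qed



lemma entropy_weight:
  fixes p :: real and n j :: nat
  assumes p: "0 < p" "p < 1/2" and j: "real j \<le> p * real n" "j \<le> n"
  shows "2 powr (- bin_entropy p * real n) \<le> p ^ j * (1 - p) ^ (n - j)"
proof -
  have p1: "0 < 1 - p" using p by simp
  have w: "2 powr (- bin_entropy p * real n) = p powr (p * n) * (1 - p) powr ((1 - p) * n)"
  proof -
    have "- bin_entropy p * real n = (p * n) * log 2 p + ((1 - p) * n) * log 2 (1 - p)"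
      by (simp add: bin_entropy_def algebra_simps)
    then have "2 powr (- bin_entropy p * real n) = (2 powr log 2 p) powr (p * n) * (2 powr log 2 (1 - p)) powr ((1 - p) * n)"
      by (simp add: powr_add powr_powr mult.commute)
    then show ?thesis using p p1 by simp
  qed
  have r: "1 \<le> ((1 - p) / p) powr (p * n - j)"
    using p j by (intro ge_one_powr_ge_zero) (auto simp: field_simps)
  have "p ^ j * (1 - p) ^ (n - j) = p powr j * (1 - p) powr (real n - real j)"
  proof -
    have "(1 - p) ^ (n - j) = (1 - p) powr real (n - j)" using p1 by (simp add: powr_realpow)
    then show ?thesis using p j by (simp add: powr_realpow of_nat_diff)
  qed
  also have "\<dots> = (p powr (p * n) * (1 - p) powr ((1 - p) * n)) * ((1 - p) / p) powr (p * n - j)"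
    using p p1 by (simp add: powr_divide powr_diff powr_add field_simps)
  finally have "p ^ j * (1 - p) ^ (n - j) = (p powr (p * n) * (1 - p) powr ((1 - p) * n)) * ((1 - p) / p) powr (p * n - j)" .
  moreover have "0 \<le> p powr (p * n) * (1 - p) powr ((1 - p) * n)" by simp
  ultimately show ?thesis using w r
    by (metis mult.right_neutral mult_left_mono)
qed

lemma binom_entropy:
  fixes p :: real and n k :: nat
  assumes p: "0 < p" "p < 1/2" and k: "real k \<le> p * real n"
  shows "real (\<Sum>j\<le>k. n choose j) \<le> 2 powr (bin_entropy p * real n)"
proof -
  have kn: "k \<le> n"
  proof -
    have "p * real n \<le> real n" using p by (intro mult_left_le_one_le) auto
    then show ?thesis using k by linarith
  qed
  define w where "w = 2 powr (- bin_entropy p * real n)"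
  have w0: "w > 0" by (simp add: w_def)
  have "real (\<Sum>j\<le>k. n choose j) * w = (\<Sum>j\<le>k. real (n choose j) * w)"
    by (simp add: sum_distrib_right)
  also have "\<dots> \<le> (\<Sum>j\<le>k. real (n choose j) * (p ^ j * (1 - p) ^ (n - j)))"
  proof (intro sum_mono mult_left_mono)
    fix j assume "j \<in> {..k}"
    then have "j \<le> k" by simp
    then show "w \<le> p ^ j * (1 - p) ^ (n - j)"
      unfolding w_def using p k kn by (intro entropy_weight) auto
  qed simp
  also have "\<dots> \<le> (\<Sum>j\<le>n. real (n choose j) * (p ^ j * (1 - p) ^ (n - j)))"
    using p kn by (intro sum_mono2) auto
  also have "\<dots> = (p + (1 - p)) ^ n"
    by (subst binomial_ring) (simp add: mult.assoc)
  also have "\<dots> = 1" by simp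
  finally have "real (\<Sum>j\<le>k. n choose j) * w \<le> 1" .
  then have "real (\<Sum>j\<le>k. n choose j) \<le> 1 / w" using w0 by (simp add: field_simps)
  also have "1 / w = 2 powr (bin_entropy p * real n)" by (simp add: w_def powr_minus divide_inverse)
  finally show ?thesis .
qed

lemma ball_card:
  fixes c :: "bool list" and n k :: nat
  assumes "length c = n"
  shows "card {x. length x = n \<and> hdist x c \<le> k} \<le> (\<Sum>j\<le>k. n choose j)"
proof -
  define f where "f x = {i. i < n \<and> x ! i \<noteq> c ! i}" for x :: "bool list"
  let ?X = "{x. length x = n \<and> hdist x c \<le> k}"
  have inj: "inj_on f ?X"
  proof
    fix x y assume x: "x \<in> ?X" and y: "y \<in> ?X" and e: "f x = f y"
    show "x = y"
    proof (rule nth_equalityI)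
      show "length x = length y" using x y by simp
      fix i assume "i < length x"
      then have "i < n" using x by simp
      then have "(x ! i \<noteq> c ! i) = (y ! i \<noteq> c ! i)" using e unfolding f_def by blast
      then show "x ! i = y ! i" by auto
    qed
  qed
  have img: "f ` ?X \<subseteq> (\<Union>j\<in>{..k}. {B. B \<subseteq> {..<n} \<and> card B = j})"
  proof
    fix B assume "B \<in> f ` ?X"
    then obtain x where x: "x \<in> ?X" "B = f x" by auto
    have "hdist x c = card B" using x by (simp add: hdist_def f_def)
    then show "B \<in> (\<Union>j\<in>{..k}. {B. B \<subseteq> {..<n} \<and> card B = j})"
      using x by (auto simp: f_def)
  qed
  have "card ?X = card (f ` ?X)" using inj by (simp add: card_image)
  also have "\<dots> \<le> card (\<Union>j\<in>{..k}. {B. B \<subseteq> {..<n} \<and> card B = j})"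
    by (intro card_mono img) auto
  also have "\<dots> \<le> (\<Sum>j\<le>k. card {B. B \<subseteq> {..<n} \<and> card B = j})"
    by (rule card_UN_le) simp
  also have "\<dots> = (\<Sum>j\<le>k. n choose j)" by (simp add: n_subsets)
  finally show ?thesis .
qed

lemma consistent_card:
  "finite (consistent V) \<and> card (consistent V) = 2 ^ length (filter (\<lambda>v. v = None) V)"
proof (induction V)
  case Nil
  have "consistent [] = {[]}" by (auto simp: consistent_def)
  then show ?case by simp
next
  case (Cons v V)
  define T where "T = (if v = None then UNIV else {the v})"
  have eq: "consistent (v # V) = (\<lambda>(a, x). a # x) ` (T \<times> consistent V)"
  proof (rule set_eqI)
    fix y show "y \<in> consistent (v # V) \<longleftrightarrow> y \<in> (\<lambda>(a, x). a # x) ` (T \<times> consistent V)"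
    proof
      assume y: "y \<in> consistent (v # V)"
      then obtain a x where ax: "y = a # x" by (cases y) (auto simp: consistent_def)
      have "a \<in> T" using y ax by (force simp: consistent_def T_def)
      moreover have "x \<in> consistent V" using y ax by (force simp: consistent_def)
      ultimately show "y \<in> (\<lambda>(a, x). a # x) ` (T \<times> consistent V)" using ax by auto
    next
      assume "y \<in> (\<lambda>(a, x). a # x) ` (T \<times> consistent V)"
      then obtain a x where ax: "y = a # x" "a \<in> T" "x \<in> consistent V" by auto
      show "y \<in> consistent (v # V)" using ax
        by (auto simp: consistent_def T_def nth_Cons split: nat.splits if_splits)
    qed
  qed
  have inj: "inj_on (\<lambda>(a, x). a # x) (T \<times> consistent V)" by (auto simp: inj_on_def)
  have fT: "finite T" by (simp add: T_def)
  have cT: "card T = (if v = None then 2 else 1)" by (simp add: T_def)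
  show ?case using Cons fT cT unfolding eq
    by (simp add: card_image[OF inj] card_cartesian_product)
qed



lemma hdist_xor:
  assumes "length x = n" "length y = n" "length e = n"
  shows "hdist y (xor_str x e) = hdist x (xor_str y e)"
proof -
  have "{i. i < length y \<and> y ! i \<noteq> xor_str x e ! i} = {i. i < length x \<and> x ! i \<noteq> xor_str y e ! i}"
    using assms by (auto simp: xor_str_def)
  then show ?thesis by (simp add: hdist_def)
qed

theorem lemma4p9:
  fixes \<rho>r \<rho>w \<epsilon> :: real
  assumes "0 < \<rho>r" "\<rho>r < 1" "0 < \<rho>w" "\<rho>w < 1/2" "0 < \<epsilon>"
    and "\<rho>r < 1 - bin_entropy \<rho>w - 2 * \<epsilon>"
  shows "\<exists>C > 0. \<exists>c > 0. \<exists>N. \<forall>n \<ge> N. \<forall>(V :: bool option list) (e :: bool list).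
           length V = n \<longrightarrow> real (nonq_count V) = \<rho>r * real n \<longrightarrow>
           length e = n \<longrightarrow> real (hweight e) \<le> \<rho>w * real n \<longrightarrow>
           measure_pmf.prob
             (replicate_pmf (nat \<lfloor>2 powr (\<epsilon> * real n / 4)\<rfloor>) (pmf_of_set (consistent V)))
             {S. real (bad_count (\<rho>w * real n) e S) \<le> C * real n ^ 4 * 2 powr (\<epsilon> * real n / 8)}
           \<ge> 1 - exp (- c * real n ^ 2)"
proof (rule exI[of _ "1::real"], rule conjI, simp, rule exI[of _ "\<epsilon> / 4"], rule conjI, simp add: assms, rule exI[of _ "nat \<lceil>2 / \<epsilon>\<rceil> + 2"], intro allI impI)
  fix n :: nat and V :: "bool option list" and e :: "bool list"
  assume nN: "nat \<lceil>2 / \<epsilon>\<rceil> + 2 \<le> n" and lV: "length V = n"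
    and nq: "real (nonq_count V) = \<rho>r * real n" and le: "length e = n"
    and "real (hweight e) \<le> \<rho>w * real n"
  have eps: "\<epsilon> > 0" using assms by simp
  have n2: "n \<ge> 2" using nN by simp
  have n_eps: "2 / \<epsilon> \<le> real n" using nN by linarith
  define r where "r = \<rho>w * real n"
  define D where "D = consistent V"
  define P where "P = pmf_of_set D"
  define M where "M = nat \<lfloor>2 powr (\<epsilon> * real n / 4)\<rfloor>"
  define R where "R = (\<lambda>x y. real (hdist y (xor_str x e)) \<le> r)"
  define K where "K = 1 * real n ^ 4 * 2 powr (\<epsilon> * real n / 8)"
  define h where "h = bin_entropy \<rho>w"
  define q where "q = 2 powr ((h + \<rho>r - 1) * real n)"
  have fD: "finite D" and cD: "card D = 2 ^ length (filter (\<lambda>v. v = None) V)"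
    using consistent_card[of V] by (auto simp: D_def)
  have nqc: "nonq_count V = length (filter (\<lambda>v. v \<noteq> None) V)"
    by (simp add: nonq_count_def length_filter_conv_card)
  have lenfil: "length (filter (\<lambda>v. v = None) V) = n - nonq_count V"
    using sum_length_filter_compl[of "\<lambda>v. v = None" V] lV nqc by simp
  have nqn: "nonq_count V \<le> n" using sum_length_filter_compl[of "\<lambda>v. v = None" V] lV nqc by simp
  have cDr: "real (card D) = 2 powr (real n - \<rho>r * real n)"
  proof -
    have "real (card D) = 2 powr real (n - nonq_count V)" using cD lenfil by (simp add: powr_realpow)
    then show ?thesis using nqn nq by (simp add: of_nat_diff)
  qed
  have Dne: "D \<noteq> {}" using cD fD by auto
  have setP: "set_pmf P = D" using fD Dne by (simp add: P_def)
  have lenD: "length x = n" if "x \<in> D" for x using that lV by (simp add: D_def consistent_def)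
  have nb: "measure_pmf.prob P {x. R x y} \<le> q" if y: "y \<in> set_pmf P" for y
  proof -
    have yD: "y \<in> D" using y setP by simp
    define c where "c = xor_str y e"
    have lc: "length c = n" using lenD[OF yD] le by (simp add: c_def xor_str_def)
    define k where "k = nat \<lfloor>r\<rfloor>"
    have r0: "r \<ge> 0" using assms by (simp add: r_def)
    have kr: "real k \<le> \<rho>w * real n" using r0 by (simp add: k_def r_def)
    have sub: "D \<inter> {x. R x y} \<subseteq> {x. length x = n \<and> hdist x c \<le> k}"
    proof
      fix x assume x: "x \<in> D \<inter> {x. R x y}"
      have "hdist y (xor_str x e) = hdist x c"
        using hdist_xor[of x n y e] lenD yD x le by (simp add: c_def)
      then have "real (hdist x c) \<le> r" using x by (simp add: R_def)
      then have "hdist x c \<le> k" unfolding k_def by (simp add: le_nat_floor)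
      then show "x \<in> {x. length x = n \<and> hdist x c \<le> k}" using x lenD by auto
    qed
    have fin: "finite {x. length x = n \<and> hdist x c \<le> k}"
      by (rule finite_subset[of _ "{x :: bool list. length x = n}"]) (auto simp: finite_list_length)
    have "real (card (D \<inter> {x. R x y})) \<le> real (card {x. length x = n \<and> hdist x c \<le> k})"
      using card_mono[OF fin sub] by simp
    also have "\<dots> \<le> real (\<Sum>j\<le>k. n choose j)" using ball_card[OF lc, of k] by linarith
    also have "\<dots> \<le> 2 powr (h * real n)"
      unfolding h_def using assms kr by (intro binom_entropy) auto
    finally have num: "real (card (D \<inter> {x. R x y})) \<le> 2 powr (h * real n)" .
    have "measure_pmf.prob P {x. R x y} = real (card (D \<inter> {x. R x y})) / real (card D)"
      unfolding P_def using fD Dne by (simp add: measure_pmf_of_set)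
    also have "\<dots> \<le> 2 powr (h * real n) / 2 powr (real n - \<rho>r * real n)"
      unfolding cDr using num by (intro divide_right_mono) auto
    also have "\<dots> = q" by (simp add: q_def powr_diff[symmetric] algebra_simps)
    finally show ?thesis .
  qed
  have q0: "q \<ge> 0" by (simp add: q_def)
  have hb: "measure_pmf.prob (replicate_pmf M P) {S. n \<le> hitL R S} \<le> (real M ^ 2 * q) ^ n"
    by (rule hit_bound[OF nb q0])
  have Mle: "real M \<le> 2 powr (\<epsilon> * real n / 4)"
  proof -
    have "0 \<le> \<lfloor>2 powr (\<epsilon> * real n / 4)\<rfloor>" by simp
    then have "real M = of_int \<lfloor>2 powr (\<epsilon> * real n / 4)\<rfloor>" unfolding M_def by simp
    then show ?thesis by simp
  qed
  have "real M ^ 2 \<le> (2 powr (\<epsilon> * real n / 4)) ^ 2"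
    using Mle by (intro power_mono) auto
  also have "\<dots> = 2 powr (\<epsilon> * real n / 2)"
    by (simp add: powr_realpow[symmetric] powr_powr)
  finally have M2: "real M ^ 2 \<le> 2 powr (\<epsilon> * real n / 2)" .
  have "real M ^ 2 * q \<le> 2 powr (\<epsilon> * real n / 2) * q"
    using M2 q0 by (intro mult_right_mono) auto
  also have "\<dots> = 2 powr (\<epsilon> * real n / 2 + (h + \<rho>r - 1) * real n)"
    by (simp add: q_def powr_add)
  also have "\<dots> \<le> 2 powr (- (3/2) * \<epsilon> * real n)"
  proof (intro powr_mono)
    have "(h + \<rho>r - 1) * real n \<le> (- 2 * \<epsilon>) * real n"
      using assms by (intro mult_right_mono) (auto simp: h_def)
    then show "\<epsilon> * real n / 2 + (h + \<rho>r - 1) * real n \<le> - (3/2) * \<epsilon> * real n" by simp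
  qed simp
  finally have base: "real M ^ 2 * q \<le> 2 powr (- (3/2) * \<epsilon> * real n)" .
  have "(real M ^ 2 * q) ^ n \<le> (2 powr (- (3/2) * \<epsilon> * real n)) ^ n"
    using base q0 by (intro power_mono) auto
  also have "\<dots> = 2 powr (- (3/2) * \<epsilon> * real n ^ 2)"
    by (simp add: powr_realpow[symmetric] powr_powr power2_eq_square algebra_simps)
  also have "\<dots> = exp (- ((3/2) * ln 2) * \<epsilon> * real n ^ 2)"
    by (simp add: powr_def algebra_simps)
  also have "\<dots> \<le> exp (- (3/4 * \<epsilon>) * real n ^ 2)"
  proof -
    have "exp (1/2) \<le> (2::real)" using exp_bound_half[of "1/2::real"] by simp
    then have "1/2 \<le> ln (2::real)" by (subst ln_ge_iff) auto
    then have "3/4 \<le> (3/2) * ln (2::real)" by simp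
    then have "3/4 * \<epsilon> * real n ^ 2 \<le> ((3/2) * ln 2) * (\<epsilon> * real n ^ 2)"
      using eps mult_right_mono[of "3/4" "(3/2) * ln (2::real)" "\<epsilon> * real n ^ 2"] by simp
    then show ?thesis by (simp add: algebra_simps)
  qed
  finally have pb: "measure_pmf.prob (replicate_pmf M P) {S. n \<le> hitL R S} \<le> exp (- (3/4 * \<epsilon>) * real n ^ 2)"
    using hb by linarith
  have pb2: "measure_pmf.prob (replicate_pmf M P) {S. n \<le> hitL R (rev S)} \<le> exp (- (3/4 * \<epsilon>) * real n ^ 2)"
  proof -
    have "measure_pmf.prob (replicate_pmf M P) {S. n \<le> hitL R (rev S)}
        = measure_pmf.prob (map_pmf rev (replicate_pmf M P)) {S. n \<le> hitL R S}"
      by (simp add: vimage_def)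
    then show ?thesis using pb by (simp add: replicate_pmf_rev)
  qed
  have K2n: "2 * real n \<le> K"
  proof -
    have "2 * real n \<le> real n ^ 4"
    proof -
      have "2 * real n \<le> real n * real n" using n2 by (intro mult_right_mono) auto
      also have "\<dots> \<le> real n ^ 4"
        using n2 by (simp add: power_increasing[of 2 4 "real n", simplified] power2_eq_square[symmetric])
      finally show ?thesis .
    qed
    also have "\<dots> \<le> real n ^ 4 * 2 powr (\<epsilon> * real n / 8)"
    proof -
      have "1 \<le> 2 powr (\<epsilon> * real n / 8)" using eps by (intro ge_one_powr_ge_zero) auto
      then show ?thesis using mult_left_mono[of 1 "2 powr (\<epsilon> * real n / 8)" "real n ^ 4"] by simp
    qed
    finally show ?thesis by (simp add: K_def)
  qed
  have red: "UNIV \<subseteq> {S. real (bad_count r e S) \<le> K} \<union> ({S. n \<le> hitL R S} \<union> {S. n \<le> hitL R (rev S)})"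
  proof
    fix S :: "bool list list"
    let ?L = "{i. i < length S \<and> (\<exists>j<length S. i < j \<and> R (S!i) (S!j))}"
    let ?E = "{i. i < length S \<and> (\<exists>j<i. R (S!i) (S!j))}"
    have "{i. i < length S \<and> (\<exists>j<length S. j \<noteq> i \<and> real (hdist (S ! j) (xor_str (S ! i) e)) \<le> r)} \<subseteq> ?L \<union> ?E"
      by (auto simp: R_def) (metis linorder_neqE_nat)
    then have "bad_count r e S \<le> card (?L \<union> ?E)"
      unfolding bad_count_def by (intro card_mono) auto
    also have "\<dots> \<le> card ?L + card ?E" by (rule card_Un_le)
    also have "\<dots> = hitL R S + hitL R (rev S)" by (simp add: card_L card_E)
    finally have "bad_count r e S \<le> hitL R S + hitL R (rev S)" .
    then show "S \<in> {S. real (bad_count r e S) \<le> K} \<union> ({S. n \<le> hitL R S} \<union> {S. n \<le> hitL R (rev S)})"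
      using K2n by (cases "n \<le> hitL R S \<or> n \<le> hitL R (rev S)") auto
  qed
  let ?Q = "replicate_pmf M P"
  have "1 = measure_pmf.prob ?Q UNIV" by simp
  also have "\<dots> \<le> measure_pmf.prob ?Q ({S. real (bad_count r e S) \<le> K} \<union> ({S. n \<le> hitL R S} \<union> {S. n \<le> hitL R (rev S)}))"
    using red by (intro measure_pmf.finite_measure_mono) auto
  also have "\<dots> \<le> measure_pmf.prob ?Q {S. real (bad_count r e S) \<le> K} + (measure_pmf.prob ?Q {S. n \<le> hitL R S} + measure_pmf.prob ?Q {S. n \<le> hitL R (rev S)})"
    by (intro order.trans[OF measure_Un_le] add_left_mono measure_Un_le) auto
  finally have main: "1 - 2 * exp (- (3/4 * \<epsilon>) * real n ^ 2) \<le> measure_pmf.prob ?Q {S. real (bad_count r e S) \<le> K}"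
    using pb pb2 by linarith
  have "exp (- (\<epsilon> / 4) * real n ^ 2) \<ge> 2 * exp (- (3/4 * \<epsilon>) * real n ^ 2)"
  proof -
    have "\<epsilon> * real n \<ge> 2" using n_eps eps by (simp add: field_simps)
    moreover have "real n ^ 2 \<ge> real n" using n2 by (simp add: power2_eq_square)
    ultimately have "\<epsilon> * real n ^ 2 \<ge> 2"
      using eps by (meson mult_left_mono less_imp_le order_trans)
    then have "2 \<le> exp (\<epsilon> / 2 * real n ^ 2)"
      using exp_ge_add_one_self[of "\<epsilon> / 2 * real n ^ 2"] by linarith
    then have "2 * exp (- (3/4 * \<epsilon>) * real n ^ 2) \<le> exp (\<epsilon> / 2 * real n ^ 2) * exp (- (3/4 * \<epsilon>) * real n ^ 2)"
      by (intro mult_right_mono) auto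
    also have "\<dots> = exp (- (\<epsilon> / 4) * real n ^ 2)" by (simp add: exp_add[symmetric] algebra_simps)
    finally show ?thesis .
  qed
  then show "1 - exp (- (\<epsilon> / 4) * real n ^ 2) \<le> measure_pmf.prob
             (replicate_pmf (nat \<lfloor>2 powr (\<epsilon> * real n / 4)\<rfloor>) (pmf_of_set (consistent V)))
             {S. real (bad_count (\<rho>w * real n) e S) \<le> 1 * real n ^ 4 * 2 powr (\<epsilon> * real n / 8)}"
    using main unfolding M_def P_def D_def r_def K_def by linarith
qed


end
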